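(* Let $(V,E)$ be a finite graph and $p\in[0,1]$. Let $(\eta_t,\sigma_t)_{t\ge0}$ be a continuous-time Markov jump process on $\{0,1\}^E\times\{-1,1\}^V$ with the following rates: (i) if $\eta'=\eta$ and there is $x\in V$ with $\sigma'=\sigma^x$ and $\eta(e)=0$ for all $e\in E_x$, the rate from $(\eta,\sigma)$ to $(\eta',\sigma')$ is $1$; (ii) if $\sigma'=\sigma$ and there is $e\in E$ with $\eta'=\eta^e$, the rate is $p\mathbf 1_{\eta(e)=0}\delta_\sigma(e)+(1-p)\mathbf 1_{\eta(e)=1}$; (iii) all other off-diagonal rates are $0$. Suppose $(\eta_0,\sigma_0)$ is distributed according to $IP$. Then for every $x\in V$, every $\sigma\in\{-1,1\}^V$ and every $s\ge0$, $$\lim_{t\to0}\frac1t\,\mathbb P(\sigma_{t+s}=\sigma^x\mid\sigma_s=\sigma)=(1-p)^{|\{e\in E_x:\ \delta_\sigma(e)=1\}|}.$$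
   Context: Edge configurations $\eta\in\{0,1\}^E$, spin configurations $\sigma\in\{-1,1\}^V$. For $e=\langle x,y\rangle$, $\delta_\sigma(e)=\mathbf 1_{\sigma(x)=\sigma(y)}$. $IP(\eta,\sigma)=\frac1Z\prod_{e\in E}\big(p\mathbf 1_{\eta(e)=1}\delta_\sigma(e)+(1-p)\mathbf 1_{\eta(e)=0}\big)$ with $Z$ the normalizing constant. $E_x$ is the set of edges with endvertex $x$; $\sigma^x$ is $\sigma$ with the spin at $x$ flipped; $\eta^e$ is $\eta$ with the value at edge $e$ changed. *)

theory Defs
  imports "HOL-Probability.Probability"
begin

definition fin_graph :: "'v set \<Rightarrow> 'v set set \<Rightarrow> bool" where
  "fin_graph V E \<longleftrightarrow> finite V \<and> (\<forall>e\<in>E. e \<subseteq> V \<and> card e = 2)"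

type_synonym 'v state = "('v set \<Rightarrow> nat) \<times> ('v \<Rightarrow> int)"

definition states :: "'v set \<Rightarrow> 'v set set \<Rightarrow> 'v state set" where
  "states V E = (E \<rightarrow>\<^sub>E {0, 1}) \<times> (V \<rightarrow>\<^sub>E {-1, 1})"

definition delta :: "('v \<Rightarrow> int) \<Rightarrow> 'v set \<Rightarrow> real" where
  "delta \<sigma> e = (if \<forall>a\<in>e. \<forall>b\<in>e. \<sigma> a = \<sigma> b then 1 else 0)"

definition edges_at :: "'v set set \<Rightarrow> 'v \<Rightarrow> 'v set set" where
  "edges_at E x = {e \<in> E. x \<in> e}"

definition flip_spin :: "('v \<Rightarrow> int) \<Rightarrow> 'v \<Rightarrow> ('v \<Rightarrow> int)" where
  "flip_spin \<sigma> x = \<sigma>(x := - \<sigma> x)"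

definition flip_edge :: "('v set \<Rightarrow> nat) \<Rightarrow> 'v set \<Rightarrow> ('v set \<Rightarrow> nat)" where
  "flip_edge \<eta> e = \<eta>(e := 1 - \<eta> e)"

definition IP_weight :: "'v set set \<Rightarrow> real \<Rightarrow> 'v state \<Rightarrow> real" where
  "IP_weight E p st = (\<Prod>e\<in>E. (if fst st e = 1 then p * delta (snd st) e else 0)
                                + (if fst st e = 0 then 1 - p else 0))"

definition IP :: "'v set \<Rightarrow> 'v set set \<Rightarrow> real \<Rightarrow> 'v state \<Rightarrow> real" where
  "IP V E p st = IP_weight E p st / (\<Sum>u\<in>states V E. IP_weight E p u)"

definition rate :: "'v set \<Rightarrow> 'v set set \<Rightarrow> real \<Rightarrow> 'v state \<Rightarrow> 'v state \<Rightarrow> real" where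
  "rate V E p a b =
     (if snd a \<noteq> snd b \<and> fst b = fst a \<and>
         (\<exists>x\<in>V. snd b = flip_spin (snd a) x \<and> (\<forall>e\<in>edges_at E x. fst a e = 0)) then 1
      else if fst a \<noteq> fst b \<and> snd b = snd a \<and> (\<exists>e\<in>E. fst b = flip_edge (fst a) e) then
        (THE r. \<exists>e\<in>E. fst b = flip_edge (fst a) e \<and>
           r = (if fst a e = 0 then p * delta (snd a) e else 0) + (if fst a e = 1 then 1 - p else 0))
      else 0)"

definition generator :: "'v set \<Rightarrow> 'v set set \<Rightarrow> real \<Rightarrow> 'v state \<Rightarrow> 'v state \<Rightarrow> real" where
  "generator V E p a b =
     (if a = b then - (\<Sum>c\<in>states V E - {a}. rate V E p a c) else rate V E p a b)"

fun mpow :: "'s set \<Rightarrow> ('s \<Rightarrow> 's \<Rightarrow> real) \<Rightarrow> nat \<Rightarrow> 's \<Rightarrow> 's \<Rightarrow> real" where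
  "mpow S Q 0 a b = (if a = b then 1 else 0)"
| "mpow S Q (Suc n) a b = (\<Sum>c\<in>S. Q a c * mpow S Q n c b)"

definition transition :: "'v set \<Rightarrow> 'v set set \<Rightarrow> real \<Rightarrow> real \<Rightarrow> 'v state \<Rightarrow> 'v state \<Rightarrow> real" where
  "transition V E p t a b =
     (\<Sum>n. t ^ n / fact n * mpow (states V E) (generator V E p) n a b)"

definition markov_IP_process ::
  "'v set \<Rightarrow> 'v set set \<Rightarrow> real \<Rightarrow> 'w measure \<Rightarrow> (real \<Rightarrow> 'w \<Rightarrow> 'v state) \<Rightarrow> bool" where
  "markov_IP_process V E p M X \<longleftrightarrow>
     prob_space M \<and>
     (\<forall>t\<ge>0. X t \<in> M \<rightarrow>\<^sub>M count_space UNIV) \<and>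
     (\<forall>n (ts :: nat \<Rightarrow> real) (as :: nat \<Rightarrow> 'v state).
        ts 0 = 0 \<longrightarrow> (\<forall>i<n. ts i \<le> ts (Suc i)) \<longrightarrow> (\<forall>i\<le>n. as i \<in> states V E) \<longrightarrow>
        measure M {\<omega> \<in> space M. \<forall>i\<le>n. X (ts i) \<omega> = as i}
          = IP V E p (as 0) *
            (\<Prod>i<n. transition V E p (ts (Suc i) - ts i) (as i) (as (Suc i))))"

end

theory Submission
  imports Defs
begin

lemma series_lim0:
  fixes c :: "nat \<Rightarrow> real" and M :: real
  assumes M: "M \<ge> 0" and cb: "\<And>n. \<bar>c n\<bar> \<le> M ^ n" and c0: "c 0 = 0"
  shows "((\<lambda>t. (\<Sum>n. t ^ n / fact n * c n) / t) \<longlongrightarrow> c 1) (at_right 0)"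
proof -
  have summ: "summable (\<lambda>n. t ^ n / fact n * c n)" for t :: real
  proof (rule summable_comparison_test[OF _ summable_exp[of "\<bar>t\<bar> * M"]], intro exI allI impI)
    fix n :: nat
    have "norm (t ^ n / fact n * c n) = \<bar>t\<bar> ^ n * \<bar>c n\<bar> / fact n"
      by (simp add: abs_mult power_abs)
    also have "\<dots> \<le> \<bar>t\<bar> ^ n * M ^ n / fact n"
      by (intro divide_right_mono mult_left_mono cb) auto
    also have "\<dots> = inverse (fact n) * (\<bar>t\<bar> * M) ^ n"
      by (simp add: power_mult_distrib field_simps)
    finally show "norm (t ^ n / fact n * c n) \<le> inverse (fact n) * (\<bar>t\<bar> * M) ^ n" .
  qed
  define g where "g n = M ^ (n + 2) / fact (n + 2)" for n
  have sg: "summable g"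
  proof -
    have "g = (\<lambda>n. inverse (fact (n + 2)) * M ^ (n + 2))"
      by (simp add: g_def fun_eq_iff field_simps)
    then show ?thesis
      using summable_ignore_initial_segment[OF summable_exp[of M], of 2] by simp
  qed
  define K where "K = suminf g"
  have key: "\<bar>(\<Sum>n. t ^ n / fact n * c n) / t - c 1\<bar> \<le> t * K" if t: "0 < t" "t \<le> 1" for t :: real
  proof -
    define f where "f n = t ^ n / fact n * c n" for n
    have sf: "summable f" unfolding f_def by (rule summ)
    have split: "suminf f = (\<Sum>n. f (n + 2)) + t * c 1"
      using suminf_split_initial_segment[OF sf, of 2] by (simp add: f_def c0 numeral_2_eq_2)
    have bnd: "norm (f (n + 2)) \<le> t ^ 2 * g n" for n
    proof -
      have "norm (f (n + 2)) = t ^ 2 * t ^ n * \<bar>c (n+2)\<bar> / fact (n + 2)"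
        using t by (simp add: f_def abs_mult power_add power2_eq_square)
      also have "\<dots> \<le> t ^ 2 * 1 * M ^ (n + 2) / fact (n + 2)"
        using t by (intro divide_right_mono mult_mono cb power_le_one) auto
      finally show ?thesis by (simp add: g_def)
    qed
    have "norm (\<Sum>n. f (n + 2)) \<le> (\<Sum>n. t ^ 2 * g n)"
      by (rule norm_suminf_le[OF bnd summable_mult[OF sg]])
    also have "\<dots> = t ^ 2 * K" by (simp add: K_def suminf_mult[OF sg])
    finally have R: "\<bar>\<Sum>n. f (n + 2)\<bar> \<le> t ^ 2 * K" by simp
    have "(\<Sum>n. t ^ n / fact n * c n) / t - c 1 = (\<Sum>n. f (n + 2)) / t"
    proof -
      have "(\<Sum>n. t ^ n / fact n * c n) = suminf f" unfolding f_def ..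
      then show ?thesis using t split by (simp add: field_simps)
    qed
    also have "\<bar>\<dots>\<bar> \<le> t * K"
      using R t by (simp add: abs_div power2_eq_square divide_le_eq mult_ac)
    finally show ?thesis .
  qed
  have "((\<lambda>t. (\<Sum>n. t ^ n / fact n * c n) / t - c 1) \<longlongrightarrow> 0) (at_right 0)"
  proof (rule Lim_null_comparison)
    show "\<forall>\<^sub>F t in at_right 0. norm ((\<Sum>n. t ^ n / fact n * c n) / t - c 1) \<le> t * K"
      unfolding eventually_at_right_field using key by (intro exI[of _ 1]) auto
    show "((\<lambda>t. t * K) \<longlongrightarrow> 0) (at_right 0)"
      using tendsto_mult[OF tendsto_ident_at[of 0 "{0<..}"] tendsto_const[of K]] by simp
  qed
  then show ?thesis by (simp add: LIM_zero_iff)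
qed


lemma summ_lemma:
  fixes c :: "nat \<Rightarrow> real" and M :: real and t :: real
  assumes cb: "\<And>n. \<bar>c n\<bar> \<le> M ^ n"
  shows "summable (\<lambda>n. t ^ n / fact n * c n)"
proof (rule summable_comparison_test[OF _ summable_exp[of "\<bar>t\<bar> * M"]], intro exI allI impI)
  fix n :: nat
  have "norm (t ^ n / fact n * c n) = \<bar>t\<bar> ^ n * \<bar>c n\<bar> / fact n"
    by (simp add: abs_mult power_abs)
  also have "\<dots> \<le> \<bar>t\<bar> ^ n * M ^ n / fact n"
    by (intro divide_right_mono mult_left_mono cb) auto
  also have "\<dots> = inverse (fact n) * (\<bar>t\<bar> * M) ^ n"
    by (simp add: power_mult_distrib field_simps)
  finally show "norm (t ^ n / fact n * c n) \<le> inverse (fact n) * (\<bar>t\<bar> * M) ^ n" .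
qed

locale ipm =
  fixes V :: "'v set" and E :: "'v set set" and p :: real
  assumes G: "fin_graph V E" and p0: "0 \<le> p" and p1: "p \<le> 1"
begin

abbreviation "S \<equiv> states V E"
abbreviation "Q \<equiv> generator V E p"

lemma finV: "finite V" using G by (simp add: fin_graph_def)
lemma finE: "finite E"
proof -
  have "E \<subseteq> Pow V" using G by (auto simp: fin_graph_def)
  then show ?thesis using finV finite_subset by blast
qed

lemma finS: "finite S"
  unfolding states_def using finV finE by (simp add: finite_PiE)

lemma S_edge: "a \<in> S \<Longrightarrow> e \<in> E \<Longrightarrow> fst a e = 0 \<or> fst a e = 1"
  by (cases a) (auto simp: states_def PiE_iff)

definition "Mq = (\<Sum>a\<in>S. \<Sum>c\<in>S. \<bar>Q a c\<bar>)"

lemma Mq_nonneg: "Mq \<ge> 0" unfolding Mq_def by (intro sum_nonneg) auto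

lemma mpow_bound: "a \<in> S \<Longrightarrow> \<bar>mpow S Q n a b\<bar> \<le> Mq ^ n"
proof (induction n arbitrary: a)
  case 0 then show ?case by simp
next
  case (Suc n)
  have "\<bar>mpow S Q (Suc n) a b\<bar> \<le> (\<Sum>c\<in>S. \<bar>Q a c\<bar> * \<bar>mpow S Q n c b\<bar>)"
    by (simp add: sum_abs[THEN order_trans] abs_mult)
  also have "\<dots> \<le> (\<Sum>c\<in>S. \<bar>Q a c\<bar> * Mq ^ n)"
    using Suc.IH by (intro sum_mono mult_left_mono) auto
  also have "\<dots> = (\<Sum>c\<in>S. \<bar>Q a c\<bar>) * Mq ^ n" by (simp add: sum_distrib_right)
  also have "\<dots> \<le> Mq * Mq ^ n"
  proof (intro mult_right_mono)
    show "(\<Sum>c\<in>S. \<bar>Q a c\<bar>) \<le> Mq"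
      unfolding Mq_def using Suc.prems finS
      by (intro member_le_sum[where f="\<lambda>a. \<Sum>c\<in>S. \<bar>Q a c\<bar>"]) (auto intro: sum_nonneg)
  qed (use Mq_nonneg in auto)
  finally show ?case by simp
qed

lemma summ_trans: "a \<in> S \<Longrightarrow> summable (\<lambda>n. t ^ n / fact n * mpow S Q n a b)"
  by (rule summ_lemma[OF mpow_bound])

lemma trans_lim:
  assumes "a \<in> S" "b \<in> S" "a \<noteq> b"
  shows "((\<lambda>t. transition V E p t a b / t) \<longlongrightarrow> Q a b) (at_right 0)"
proof -
  have "((\<lambda>t. (\<Sum>n. t ^ n / fact n * mpow S Q n a b) / t) \<longlongrightarrow> mpow S Q 1 a b) (at_right 0)"
    by (rule series_lim0[OF Mq_nonneg mpow_bound[OF assms(1)]]) (use assms in simp)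
  moreover have "mpow S Q 1 a b = Q a b"
    using assms finS by (simp add: if_distrib cong: if_cong)
  ultimately show ?thesis by (simp add: transition_def)
qed

lemma Q_row: assumes a: "a \<in> S" shows "(\<Sum>c\<in>S. Q a c) = 0"
proof -
  have "(\<Sum>c\<in>S. Q a c) = Q a a + (\<Sum>c\<in>S - {a}. Q a c)"
    by (rule sum.remove[OF finS a])
  also have "(\<Sum>c\<in>S - {a}. Q a c) = (\<Sum>c\<in>S - {a}. rate V E p a c)"
    by (rule sum.cong) (auto simp: generator_def)
  finally show ?thesis by (simp add: generator_def)
qed

lemma mpow_row: "a \<in> S \<Longrightarrow> (\<Sum>b\<in>S. mpow S Q (Suc n) a b) = 0"
proof (induction n arbitrary: a)
  case 0
  have "(\<Sum>b\<in>S. mpow S Q (Suc 0) a b) = (\<Sum>c\<in>S. \<Sum>b\<in>S. Q a c * (if c = b then 1 else 0))"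
    unfolding mpow.simps by (rule sum.swap)
  also have "\<dots> = (\<Sum>c\<in>S. Q a c)"
    by (rule sum.cong[OF refl]) (simp add: finS if_distrib[of "\<lambda>z. Q a _ * z"] cong: if_cong)
  also have "\<dots> = 0" by (rule Q_row[OF 0])
  finally show ?case .
next
  case (Suc n)
  have "(\<Sum>b\<in>S. mpow S Q (Suc (Suc n)) a b) = (\<Sum>c\<in>S. Q a c * (\<Sum>b\<in>S. mpow S Q (Suc n) c b))"
    unfolding mpow.simps sum_distrib_left by (rule sum.swap)
  also have "\<dots> = 0" using Suc.IH by simp
  finally show ?case .
qed

lemma trans_row: assumes a: "a \<in> S" shows "(\<Sum>b\<in>S. transition V E p t a b) = 1"
proof -
  have "(\<Sum>b\<in>S. transition V E p t a b) = (\<Sum>n. \<Sum>b\<in>S. t ^ n / fact n * mpow S Q n a b)"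
    unfolding transition_def by (rule suminf_sum[symmetric]) (rule summ_trans[OF a])
  also have "\<dots> = (\<Sum>n. if n = 0 then 1 else 0)"
  proof (rule arg_cong[where f=suminf], rule ext)
    fix n show "(\<Sum>b\<in>S. t ^ n / fact n * mpow S Q n a b) = (if n = 0 then 1 else 0)"
    proof (cases n)
      case 0 then show ?thesis using a finS by simp
    next
      case (Suc m)
      have "(\<Sum>b\<in>S. t ^ n / fact n * mpow S Q n a b) = t ^ n / fact n * (\<Sum>b\<in>S. mpow S Q (Suc m) a b)"
        by (simp only: Suc sum_distrib_left)
      then show ?thesis using mpow_row[OF a, of m] Suc by simp
    qed
  qed
  also have "\<dots> = 1" using sums_unique[OF sums_single[of 0 "\<lambda>_. 1::real"]] by simp
  finally show ?thesis .
qed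

definition wf :: "('v \<Rightarrow> int) \<Rightarrow> 'v set \<Rightarrow> nat \<Rightarrow> real" where
  "wf \<sigma> e v = (if v = 1 then p * delta \<sigma> e else 0) + (if v = 0 then 1 - p else 0)"
definition rf :: "('v \<Rightarrow> int) \<Rightarrow> 'v set \<Rightarrow> nat \<Rightarrow> real" where
  "rf \<sigma> e v = (if v = 0 then p * delta \<sigma> e else 0) + (if v = 1 then 1 - p else 0)"

lemma IPw_eq: "IP_weight E p a = (\<Prod>e\<in>E. wf (snd a) e (fst a e))"
  by (simp add: IP_weight_def wf_def)

lemma delta_01: "delta \<sigma> e = 0 \<or> delta \<sigma> e = 1" by (simp add: delta_def)

lemma wf_nonneg: "wf \<sigma> e v \<ge> 0"
  using delta_01[of \<sigma> e] p0 p1 by (auto simp: wf_def)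

lemma IPw_nonneg: "IP_weight E p a \<ge> 0"
  unfolding IPw_eq by (intro prod_nonneg) (auto intro: wf_nonneg)

definition "spinr a b \<longleftrightarrow> snd a \<noteq> snd b \<and> fst b = fst a \<and>
   (\<exists>x\<in>V. snd b = flip_spin (snd a) x \<and> (\<forall>e\<in>edges_at E x. fst a e = 0))"
definition "edger a b \<longleftrightarrow> fst a \<noteq> fst b \<and> snd b = snd a \<and> (\<exists>e\<in>E. fst b = flip_edge (fst a) e)"

lemma flip_spin_inv: "flip_spin (flip_spin \<sigma> x) x = \<sigma>"
  by (simp add: flip_spin_def)

lemma flip_edge_inv: "\<eta> e \<le> 1 \<Longrightarrow> flip_edge (flip_edge \<eta> e) e = \<eta>"
  by (auto simp: flip_edge_def fun_eq_iff)

lemma spin_sym: "spinr a b \<Longrightarrow> spinr b a"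
  unfolding spinr_def by (metis flip_spin_inv)

lemma edge_sym: assumes a: "a \<in> S" and ab: "edger a b" shows "edger b a"
proof -
  from ab obtain e where e: "e \<in> E" "fst b = flip_edge (fst a) e" "fst a \<noteq> fst b" "snd b = snd a"
    unfolding edger_def by blast
  have "fst a e \<le> 1" using S_edge[OF a e(1)] by auto
  then have "fst a = flip_edge (fst b) e" using e flip_edge_inv by metis
  then show ?thesis using e unfolding edger_def by auto
qed

lemma flip_edge_unique:
  assumes a: "a \<in> S" and e: "e \<in> E" and eq: "flip_edge (fst a) e = flip_edge (fst a) e'"
  shows "e = e'"
proof (rule ccontr)
  assume ne: "e \<noteq> e'"
  have "flip_edge (fst a) e e = flip_edge (fst a) e' e" using eq by simp
  then have "1 - fst a e = fst a e" using ne by (simp add: flip_edge_def)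
  then show False using S_edge[OF a e] by auto
qed

lemma rate_edge:
  assumes a: "a \<in> S" and ne: "fst a \<noteq> fst b" and sb: "snd b = snd a" and e: "e \<in> E"
    and fb: "fst b = flip_edge (fst a) e"
  shows "rate V E p a b = rf (snd a) e (fst a e)"
proof -
  have "rate V E p a b = (THE r. \<exists>e\<in>E. fst b = flip_edge (fst a) e \<and> r = rf (snd a) e (fst a e))"
    using ne sb e fb unfolding rate_def rf_def by auto
  also have "\<dots> = rf (snd a) e (fst a e)"
  proof (rule the_equality)
    show "\<exists>e'\<in>E. fst b = flip_edge (fst a) e' \<and> rf (snd a) e (fst a e) = rf (snd a) e' (fst a e')"
      using e fb by blast
    fix r assume "\<exists>e'\<in>E. fst b = flip_edge (fst a) e' \<and> r = rf (snd a) e' (fst a e')"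
    then obtain e' where "e' \<in> E" "fst b = flip_edge (fst a) e'" "r = rf (snd a) e' (fst a e')" by blast
    moreover have "e = e'" using flip_edge_unique[OF a e] fb \<open>fst b = flip_edge (fst a) e'\<close> by simp
    ultimately show "r = rf (snd a) e (fst a e)" by simp
  qed
  finally show ?thesis .
qed

lemma rate_spin: "spinr a b \<Longrightarrow> rate V E p a b = 1"
  unfolding rate_def spinr_def by auto

lemma rate_zero: "\<not> spinr a b \<Longrightarrow> \<not> edger a b \<Longrightarrow> rate V E p a b = 0"
  unfolding rate_def spinr_def edger_def by auto

lemma delta_cong: "(\<And>u. u \<in> e \<Longrightarrow> \<sigma>' u = \<sigma> u) \<Longrightarrow> delta \<sigma>' e = delta \<sigma> e"
  by (simp add: delta_def)

lemma w_spin: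
  assumes fb: "fst b = fst a" and sb: "snd b = flip_spin (snd a) x"
    and cl: "\<forall>e\<in>edges_at E x. fst a e = 0"
  shows "IP_weight E p b = IP_weight E p a"
  unfolding IPw_eq
proof (rule prod.cong[OF refl])
  fix e assume e: "e \<in> E"
  show "wf (snd b) e (fst b e) = wf (snd a) e (fst a e)"
  proof (cases "x \<in> e")
    case True
    then have "fst a e = 0" using cl e by (auto simp: edges_at_def)
    then show ?thesis using fb by (simp add: wf_def)
  next
    case False
    then have "delta (snd b) e = delta (snd a) e"
      using sb by (intro delta_cong) (auto simp: flip_spin_def)
    then show ?thesis using fb by (simp add: wf_def)
  qed
qed

lemma w_edge:
  assumes a: "a \<in> S" and e: "e \<in> E" and fb: "fst b = flip_edge (fst a) e" and sb: "snd b = snd a"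
  shows "IP_weight E p a * rf (snd a) e (fst a e) = IP_weight E p b * rf (snd b) e (fst b e)"
proof -
  define R where "R = (\<Prod>e'\<in>E - {e}. wf (snd a) e' (fst a e'))"
  have Ra: "IP_weight E p a = wf (snd a) e (fst a e) * R"
    unfolding IPw_eq R_def by (rule prod.remove[OF finE e])
  have "IP_weight E p b = wf (snd b) e (fst b e) * (\<Prod>e'\<in>E - {e}. wf (snd b) e' (fst b e'))"
    unfolding IPw_eq by (rule prod.remove[OF finE e])
  also have "(\<Prod>e'\<in>E - {e}. wf (snd b) e' (fst b e')) = R"
    unfolding R_def using fb sb by (intro prod.cong) (auto simp: flip_edge_def)
  finally have Rb: "IP_weight E p b = wf (snd b) e (fst b e) * R" .
  have fbe: "fst b e = 1 - fst a e" using fb by (simp add: flip_edge_def)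
  show ?thesis
    using S_edge[OF a e] unfolding Ra Rb fbe sb
    by (auto simp: wf_def rf_def)
qed

lemma detailed:
  assumes a: "a \<in> S" and b: "b \<in> S"
  shows "IP_weight E p a * rate V E p a b = IP_weight E p b * rate V E p b a"
proof (cases "spinr a b")
  case True
  then have "spinr b a" by (rule spin_sym)
  from True obtain x where "fst b = fst a" "snd b = flip_spin (snd a) x" "\<forall>e\<in>edges_at E x. fst a e = 0"
    unfolding spinr_def by blast
  then have "IP_weight E p b = IP_weight E p a" by (rule w_spin)
  then show ?thesis using rate_spin[OF True] rate_spin[OF \<open>spinr b a\<close>] by simp
next
  case nab: False
  then have nba: "\<not> spinr b a" using spin_sym by blast
  show ?thesis
  proof (cases "edger a b")
    case True
    then obtain e where e: "e \<in> E" "fst b = flip_edge (fst a) e" "fst a \<noteq> fst b" "snd b = snd a"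
      unfolding edger_def by blast
    have "fst a e \<le> 1" using S_edge[OF a e(1)] by auto
    then have fa: "fst a = flip_edge (fst b) e" using e flip_edge_inv by metis
    have r1: "rate V E p a b = rf (snd a) e (fst a e)" by (rule rate_edge[OF a e(3) e(4) e(1) e(2)])
    have r2: "rate V E p b a = rf (snd b) e (fst b e)"
      by (rule rate_edge[OF b]) (use e fa in auto)
    show ?thesis unfolding r1 r2 by (rule w_edge[OF a e(1) e(2) e(4)])
  next
    case False
    then have "\<not> edger b a" using edge_sym[OF b] by blast
    then show ?thesis using rate_zero nab nba False by simp
  qed
qed

lemma IPw_Q: assumes b: "b \<in> S" shows "(\<Sum>a\<in>S. IP_weight E p a * Q a b) = 0"
proof -
  have "(\<Sum>a\<in>S. IP_weight E p a * Q a b) = IP_weight E p b * Q b b + (\<Sum>a\<in>S - {b}. IP_weight E p a * Q a b)"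
    by (rule sum.remove[OF finS b])
  also have "(\<Sum>a\<in>S - {b}. IP_weight E p a * Q a b) = (\<Sum>a\<in>S - {b}. IP_weight E p b * rate V E p b a)"
    by (rule sum.cong[OF refl]) (use b detailed in \<open>auto simp: generator_def\<close>)
  also have "\<dots> = IP_weight E p b * (\<Sum>a\<in>S - {b}. rate V E p b a)" by (simp add: sum_distrib_left)
  finally show ?thesis by (simp add: generator_def)
qed

abbreviation "Z \<equiv> (\<Sum>u\<in>S. IP_weight E p u)"

lemma IP_eq: "IP V E p a = IP_weight E p a / Z" by (simp add: IP_def)

lemma IP_Q: assumes b: "b \<in> S" shows "(\<Sum>a\<in>S. IP V E p a * Q a b) = 0"
proof -
  have "(\<Sum>a\<in>S. IP V E p a * Q a b) = (\<Sum>a\<in>S. IP_weight E p a * Q a b) / Z"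
    by (simp add: IP_eq sum_divide_distrib)
  then show ?thesis using IPw_Q[OF b] by simp
qed

lemma IP_mpow: assumes b: "b \<in> S" shows "(\<Sum>a\<in>S. IP V E p a * mpow S Q (Suc n) a b) = 0"
proof -
  have "(\<Sum>a\<in>S. IP V E p a * mpow S Q (Suc n) a b) = (\<Sum>c\<in>S. (\<Sum>a\<in>S. IP V E p a * Q a c) * mpow S Q n c b)"
    unfolding mpow.simps sum_distrib_left sum_distrib_right mult.assoc by (rule sum.swap)
  also have "\<dots> = 0" using IP_Q by simp
  finally show ?thesis .
qed

lemma IP_stat: assumes b: "b \<in> S" shows "(\<Sum>a\<in>S. IP V E p a * transition V E p s a b) = IP V E p b"
proof -
  have "(\<Sum>a\<in>S. IP V E p a * transition V E p s a b)
      = (\<Sum>a\<in>S. \<Sum>n. IP V E p a * (s ^ n / fact n * mpow S Q n a b))"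
    unfolding transition_def by (rule sum.cong[OF refl], rule suminf_mult[symmetric], rule summ_trans)
  also have "\<dots> = (\<Sum>n. \<Sum>a\<in>S. IP V E p a * (s ^ n / fact n * mpow S Q n a b))"
    by (rule suminf_sum[symmetric], rule summable_mult, rule summ_trans)
  also have "\<dots> = (\<Sum>n. if n = 0 then IP V E p b else 0)"
  proof (rule arg_cong[where f=suminf], rule ext)
    fix n show "(\<Sum>a\<in>S. IP V E p a * (s ^ n / fact n * mpow S Q n a b)) = (if n = 0 then IP V E p b else 0)"
    proof (cases n)
      case 0 then show ?thesis using b finS by (simp add: if_distrib[of "\<lambda>z. IP V E p _ * z"] cong: if_cong)
    next
      case (Suc m)
      have "(\<Sum>a\<in>S. IP V E p a * (s ^ n / fact n * mpow S Q n a b)) = s ^ n / fact n * (\<Sum>a\<in>S. IP V E p a * mpow S Q (Suc m) a b)"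
        by (simp only: Suc sum_distrib_left mult_ac)
      then show ?thesis using IP_mpow[OF b, of m] Suc by simp
    qed
  qed
  also have "\<dots> = IP V E p b" using sums_unique[OF sums_single[of 0 "\<lambda>_. IP V E p b"]] by simp
  finally show ?thesis .
qed

lemma Z_pos: "Z > 0"
proof -
  define w0 :: "'v state" where "w0 = (if p > 0 then (\<lambda>e\<in>E. 1) else (\<lambda>e\<in>E. 0), \<lambda>v\<in>V. 1)"
  have w0S: "w0 \<in> S" unfolding w0_def states_def by auto
  have "IP_weight E p w0 > 0"
    unfolding IPw_eq
  proof (rule prod_pos)
    fix e assume e: "e \<in> E"
    have eV: "e \<subseteq> V" using G e by (auto simp: fin_graph_def)
    have "delta (\<lambda>v\<in>V. 1) e = 1" using eV by (auto simp: delta_def)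
    then show "0 < wf (snd w0) e (fst w0 e)"
      using e p1 by (cases "p > 0") (auto simp: w0_def wf_def)
  qed
  also have "\<dots> \<le> Z"
    by (rule member_le_sum[OF w0S _ finS]) (rule IPw_nonneg)
  finally show ?thesis .
qed

lemma IP_sum: "(\<Sum>a\<in>S. IP V E p a) = 1"
  using Z_pos by (simp add: IP_eq sum_divide_distrib[symmetric])

lemma flip_ne: "\<sigma> \<in> V \<rightarrow>\<^sub>E {-1, 1} \<Longrightarrow> x \<in> V \<Longrightarrow> flip_spin \<sigma> x \<noteq> \<sigma>"
  by (auto simp: flip_spin_def fun_eq_iff PiE_iff)

lemma flip_inj: assumes "\<sigma> \<in> V \<rightarrow>\<^sub>E {-1, 1}" "x \<in> V" "flip_spin \<sigma> y = flip_spin \<sigma> x"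
  shows "y = x"
proof (rule ccontr)
  assume "y \<noteq> x"
  then have "flip_spin \<sigma> y x = \<sigma> x" by (simp add: flip_spin_def)
  moreover have "flip_spin \<sigma> x x = - \<sigma> x" by (simp add: flip_spin_def)
  ultimately show False using assms by (auto simp: PiE_iff)
qed

lemma flip_in: "\<sigma> \<in> V \<rightarrow>\<^sub>E {-1, 1} \<Longrightarrow> x \<in> V \<Longrightarrow> flip_spin \<sigma> x \<in> V \<rightarrow>\<^sub>E {-1, 1}"
  by (auto simp: flip_spin_def PiE_iff extensional_def)

lemma Q_flip:
  assumes a: "a \<in> S" and sa: "snd a = \<sigma>" and \<sigma>: "\<sigma> \<in> V \<rightarrow>\<^sub>E {-1, 1}" and x: "x \<in> V"
    and sb: "snd b = flip_spin \<sigma> x"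
  shows "Q a b = (if fst b = fst a \<and> (\<forall>e\<in>edges_at E x. fst a e = 0) then 1 else 0)"
proof -
  have ne: "snd b \<noteq> snd a" using flip_ne[OF \<sigma> x] sa sb by simp
  then have "a \<noteq> b" by auto
  then have Qr: "Q a b = rate V E p a b" by (simp add: generator_def)
  have ned: "\<not> edger a b" using ne by (simp add: edger_def)
  show ?thesis
  proof (cases "spinr a b")
    case True
    then obtain y where y: "fst b = fst a" "y \<in> V" "snd b = flip_spin (snd a) y" "\<forall>e\<in>edges_at E y. fst a e = 0"
      unfolding spinr_def by blast
    have "y = x" using flip_inj[OF \<sigma> x] y(3) sa sb by simp
    then show ?thesis using Qr rate_spin[OF True] y by simp
  next
    case False
    have "\<not> (fst b = fst a \<and> (\<forall>e\<in>edges_at E x. fst a e = 0))"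
      using False ne x sa sb unfolding spinr_def by auto
    then show ?thesis using Qr rate_zero[OF False ned] by simp
  qed
qed

lemma flip_sum:
  assumes a: "a \<in> S" and sa: "snd a = \<sigma>" and \<sigma>: "\<sigma> \<in> V \<rightarrow>\<^sub>E {-1, 1}" and x: "x \<in> V"
  shows "(\<Sum>b\<in>S. if snd b = flip_spin \<sigma> x then Q a b else 0)
       = (if \<forall>e\<in>edges_at E x. fst a e = 0 then 1 else 0)"
proof -
  define k where "k = (fst a, flip_spin \<sigma> x)"
  define c :: real where "c = (if \<forall>e\<in>edges_at E x. fst a e = 0 then 1 else 0)"
  have kS: "k \<in> S" using a flip_in[OF \<sigma> x] by (cases a) (simp add: k_def states_def)
  have "(\<Sum>b\<in>S. if snd b = flip_spin \<sigma> x then Q a b else 0) = (\<Sum>b\<in>S. if b = k then c else 0)"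
  proof (rule sum.cong[OF refl])
    fix b assume b: "b \<in> S"
    show "(if snd b = flip_spin \<sigma> x then Q a b else 0) = (if b = k then c else 0)"
    proof (cases "snd b = flip_spin \<sigma> x")
      case True
      then show ?thesis using Q_flip[OF a sa \<sigma> x True] by (cases b) (auto simp: k_def c_def)
    next
      case False then show ?thesis by (auto simp: k_def)
    qed
  qed
  also have "\<dots> = c" using kS finS by simp
  finally show ?thesis by (simp add: c_def)
qed

lemma sum_fiber:
  assumes \<sigma>: "\<sigma> \<in> V \<rightarrow>\<^sub>E {-1, 1}"
  shows "(\<Sum>a\<in>S. if snd a = \<sigma> then g a else 0) = (\<Sum>\<eta>\<in>E \<rightarrow>\<^sub>E {0, 1}. g (\<eta>, \<sigma>))"
proof -
  have "(\<Sum>a\<in>S. if snd a = \<sigma> then g a else 0)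
     = (\<Sum>\<eta>\<in>E \<rightarrow>\<^sub>E {0, 1}. \<Sum>\<tau>\<in>V \<rightarrow>\<^sub>E {-1, 1}. if \<tau> = \<sigma> then g (\<eta>, \<tau>) else 0)"
    unfolding states_def by (subst sum.cartesian_product) (rule sum.cong, auto)
  also have "\<dots> = (\<Sum>\<eta>\<in>E \<rightarrow>\<^sub>E {0, 1}. g (\<eta>, \<sigma>))"
    using \<sigma> finV by (simp add: finite_PiE)
  finally show ?thesis .
qed

lemma fiber_ratio:
  assumes \<sigma>: "\<sigma> \<in> V \<rightarrow>\<^sub>E {-1, 1}" and x: "x \<in> V"
    and pos: "(\<Sum>a\<in>S. if snd a = \<sigma> then IP V E p a else 0) > 0"
  shows "(\<Sum>a\<in>S. if snd a = \<sigma> \<and> (\<forall>e\<in>edges_at E x. fst a e = 0) then IP V E p a else 0)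
         / (\<Sum>a\<in>S. if snd a = \<sigma> then IP V E p a else 0)
       = (1 - p) ^ card {e \<in> edges_at E x. delta \<sigma> e = 1}"
proof -
  define Ex where "Ex = edges_at E x"
  define B where "B e = (if e \<in> Ex then {0} else {0, 1::nat})" for e
  define N0 where "N0 = (\<Prod>e\<in>E. \<Sum>v\<in>B e. wf \<sigma> e v)"
  define D0 where "D0 = (\<Prod>e\<in>E. \<Sum>v\<in>{0, 1}. wf \<sigma> e v)"
  have finB: "finite (B e)" for e by (simp add: B_def)
  have D0eq: "(\<Sum>a\<in>S. if snd a = \<sigma> then IP V E p a else 0) = D0 / Z"
  proof -
    have "(\<Sum>a\<in>S. if snd a = \<sigma> then IP V E p a else 0) = (\<Sum>a\<in>S. if snd a = \<sigma> then IP_weight E p a else 0) / Z"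
      by (simp add: IP_eq sum_divide_distrib if_distrib[of "\<lambda>z. z / Z"] cong: if_cong)
    also have "(\<Sum>a\<in>S. if snd a = \<sigma> then IP_weight E p a else 0) = (\<Sum>\<eta>\<in>E \<rightarrow>\<^sub>E {0, 1}. \<Prod>e\<in>E. wf \<sigma> e (\<eta> e))"
      by (subst sum_fiber[OF \<sigma>]) (simp add: IPw_eq)
    also have "\<dots> = D0" unfolding D0_def by (rule prod_sum_PiE[symmetric]) (simp_all add: finE)
    finally show ?thesis .
  qed
  have N0eq: "(\<Sum>a\<in>S. if snd a = \<sigma> \<and> (\<forall>e\<in>Ex. fst a e = 0) then IP V E p a else 0) = N0 / Z"
  proof -
    have "(\<Sum>a\<in>S. if snd a = \<sigma> \<and> (\<forall>e\<in>Ex. fst a e = 0) then IP V E p a else 0)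
        = (\<Sum>a\<in>S. if snd a = \<sigma> then (if (\<forall>e\<in>Ex. fst a e = 0) then IP_weight E p a else 0) else 0) / Z"
      unfolding sum_divide_distrib by (rule sum.cong[OF refl]) (simp add: IP_eq)
    also have "(\<Sum>a\<in>S. if snd a = \<sigma> then (if (\<forall>e\<in>Ex. fst a e = 0) then IP_weight E p a else 0) else 0)
        = (\<Sum>\<eta>\<in>E \<rightarrow>\<^sub>E {0, 1}. if (\<forall>e\<in>Ex. \<eta> e = 0) then \<Prod>e\<in>E. wf \<sigma> e (\<eta> e) else 0)"
      by (subst sum_fiber[OF \<sigma>]) (simp only: IPw_eq fst_conv snd_conv)
    also have "\<dots> = (\<Sum>\<eta>\<in>PiE E B. \<Prod>e\<in>E. wf \<sigma> e (\<eta> e))"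
    proof (rule sum.mono_neutral_cong_right)
      show "finite (E \<rightarrow>\<^sub>E {0::nat, 1})" using finE by (simp add: finite_PiE)
      show "PiE E B \<subseteq> E \<rightarrow>\<^sub>E {0, 1}" by (auto simp: B_def PiE_iff split: if_splits; metis neq0_conv)
      show "\<forall>\<eta>\<in>(E \<rightarrow>\<^sub>E {0, 1}) - (PiE E B). (if (\<forall>e\<in>Ex. \<eta> e = 0) then \<Prod>e\<in>E. wf \<sigma> e (\<eta> e) else 0) = 0"
        by (auto simp: B_def PiE_iff Ex_def edges_at_def)
      show "(if (\<forall>e\<in>Ex. \<eta> e = 0) then \<Prod>e\<in>E. wf \<sigma> e (\<eta> e) else 0) = (\<Prod>e\<in>E. wf \<sigma> e (\<eta> e))"
        if "\<eta> \<in> PiE E B" for \<eta>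
        using that by (auto simp: B_def PiE_iff Ex_def edges_at_def)
    qed
    also have "\<dots> = N0" unfolding N0_def by (rule prod_sum_PiE[symmetric]) (simp_all add: finE finB)
    finally show ?thesis .
  qed
  have "D0 \<noteq> 0" using pos D0eq by auto
  then have nz: "wf \<sigma> e 0 + wf \<sigma> e 1 \<noteq> 0" if "e \<in> E" for e
    using that finE by (auto simp: D0_def prod_zero_iff)
  have "N0 / D0 = (\<Prod>e\<in>E. (\<Sum>v\<in>B e. wf \<sigma> e v) / (\<Sum>v\<in>{0, 1}. wf \<sigma> e v))"
    unfolding N0_def D0_def by (rule prod_dividef[symmetric])
  also have "\<dots> = (\<Prod>e\<in>E. if e \<in> Ex \<and> delta \<sigma> e = 1 then 1 - p else 1)"
  proof (rule prod.cong[OF refl])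
    fix e assume e: "e \<in> E"
    have nz': "wf \<sigma> e 0 + wf \<sigma> e 1 \<noteq> 0" by (rule nz[OF e])
    show "(\<Sum>v\<in>B e. wf \<sigma> e v) / (\<Sum>v\<in>{0, 1}. wf \<sigma> e v) = (if e \<in> Ex \<and> delta \<sigma> e = 1 then 1 - p else 1)"
    proof (cases "e \<in> Ex")
      case True
      then show ?thesis using nz' delta_01[of \<sigma> e] by (auto simp: B_def wf_def)
    next
      case False
      then show ?thesis using nz' by (simp add: B_def)
    qed
  qed
  also have "\<dots> = (\<Prod>e\<in>{e \<in> E. e \<in> Ex \<and> delta \<sigma> e = 1}. 1 - p)"
    by (rule prod.inter_filter[symmetric, OF finE])
  also have "{e \<in> E. e \<in> Ex \<and> delta \<sigma> e = 1} = {e \<in> edges_at E x. delta \<sigma> e = 1}"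
    by (auto simp: Ex_def edges_at_def)
  finally have "N0 / D0 = (1 - p) ^ card {e \<in> edges_at E x. delta \<sigma> e = 1}" by simp
  then show ?thesis using N0eq D0eq Z_pos unfolding Ex_def by simp
qed

lemma sum3: "(\<Sum>\<tau>\<in>A \<times> B \<times> C. g \<tau>) = (\<Sum>a\<in>A. \<Sum>b\<in>B. \<Sum>c\<in>C. g (a, b, c))"
  by (simp add: sum.cartesian_product)

lemma event_measure:
  assumes mp: "markov_IP_process V E p M X" and s: "0 \<le> s" and t: "0 \<le> t"
  shows "measure M {\<omega> \<in> space M. P (X s \<omega>) \<and> R (X (t + s) \<omega>)}
       = (\<Sum>a\<in>S. \<Sum>b\<in>S. if P a \<and> R b then IP V E p a * transition V E p t a b else 0)"
proof -
  interpret prob_space M using mp by (simp add: markov_IP_process_def)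
  have meas: "X u \<in> M \<rightarrow>\<^sub>M count_space UNIV" if "u \<ge> 0" for u
    using mp that by (simp add: markov_IP_process_def)
  have fdd: "\<And>n ts as. ts 0 = 0 \<Longrightarrow> (\<forall>i<n. ts i \<le> ts (Suc i)) \<Longrightarrow> (\<forall>i\<le>n. as i \<in> S) \<Longrightarrow>
        measure M {\<omega> \<in> space M. \<forall>i\<le>n. X (ts i) \<omega> = as i}
          = IP V E p (as 0) * (\<Prod>i<n. transition V E p (ts (Suc i) - ts i) (as i) (as (Suc i)))"
    using mp unfolding markov_IP_process_def by blast
  have evt: "{\<omega> \<in> space M. Pr (X u \<omega>)} \<in> sets M" if "u \<ge> 0" for u Pr
  proof -
    have "{\<omega> \<in> space M. Pr (X u \<omega>)} = X u -` {a. Pr a} \<inter> space M" by auto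
    then show ?thesis using measurable_sets[OF meas[OF that], of "{a. Pr a}"] by simp
  qed
  define Pt where "Pt = transition V E p"
  define T where "T = S \<times> S \<times> S"
  define A where "A \<tau> = {\<omega> \<in> space M. X 0 \<omega> = fst \<tau> \<and> X s \<omega> = fst (snd \<tau>) \<and> X (t + s) \<omega> = snd (snd \<tau>)}" for \<tau>
  have finT: "finite T" using finS by (simp add: T_def)
  have A_sets: "A \<tau> \<in> sets M" for \<tau>
  proof -
    have "A \<tau> = {\<omega> \<in> space M. X 0 \<omega> = fst \<tau>} \<inter> {\<omega> \<in> space M. X s \<omega> = fst (snd \<tau>)}
             \<inter> {\<omega> \<in> space M. X (t + s) \<omega> = snd (snd \<tau>)}" by (auto simp: A_def)
    then show ?thesis using evt s t by simp
  qed
  have fdd3: "measure M (A \<tau>) = IP V E p (fst \<tau>) * Pt s (fst \<tau>) (fst (snd \<tau>)) * Pt t (fst (snd \<tau>)) (snd (snd \<tau>))"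
    if \<tau>: "\<tau> \<in> T" for \<tau>
  proof -
    define ts :: "nat \<Rightarrow> real" where "ts i = (if i = 0 then 0 else if i = 1 then s else t + s)" for i
    define as :: "nat \<Rightarrow> 'v state" where "as i = (if i = 0 then fst \<tau> else if i = 1 then fst (snd \<tau>) else snd (snd \<tau>))" for i
    have "measure M {\<omega> \<in> space M. \<forall>i\<le>2. X (ts i) \<omega> = as i}
          = IP V E p (as 0) * (\<Prod>i<2. transition V E p (ts (Suc i) - ts i) (as i) (as (Suc i)))"
      by (rule fdd) (use s t \<tau> in \<open>auto simp: ts_def as_def T_def numeral_2_eq_2 less_Suc_eq\<close>)
    moreover have "{\<omega> \<in> space M. \<forall>i\<le>2. X (ts i) \<omega> = as i} = A \<tau>"
      by (auto simp: A_def ts_def as_def numeral_2_eq_2 le_Suc_eq)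
    ultimately show ?thesis by (simp add: ts_def as_def numeral_2_eq_2 Pt_def)
  qed
  have disj: "disjoint_family_on A T"
    unfolding disjoint_family_on_def A_def by (auto simp: prod_eq_iff)
  have total: "(\<Sum>\<tau>\<in>T. measure M (A \<tau>)) = 1"
  proof -
    have "(\<Sum>\<tau>\<in>T. measure M (A \<tau>)) = (\<Sum>a0\<in>S. \<Sum>a\<in>S. \<Sum>b\<in>S. IP V E p a0 * Pt s a0 a * Pt t a b)"
      unfolding T_def sum3 by (intro sum.cong refl) (simp add: fdd3 T_def)
    also have "\<dots> = (\<Sum>a0\<in>S. \<Sum>a\<in>S. IP V E p a0 * Pt s a0 a)"
      by (intro sum.cong refl) (simp add: sum_distrib_left[symmetric] Pt_def trans_row)
    also have "\<dots> = (\<Sum>a\<in>S. \<Sum>a0\<in>S. IP V E p a0 * Pt s a0 a)" by (rule sum.swap)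
    also have "\<dots> = (\<Sum>a\<in>S. IP V E p a)"
      by (intro sum.cong refl) (simp add: Pt_def IP_stat)
    finally show ?thesis using IP_sum by simp
  qed
  define U where "U = (\<Union>\<tau>\<in>T. A \<tau>)"
  have U_sets: "U \<in> sets M" unfolding U_def using finT A_sets by auto
  have mU: "measure M U = 1"
  proof -
    have "measure M U = (\<Sum>\<tau>\<in>T. measure M (A \<tau>))"
      unfolding U_def by (rule measure_finite_Union[OF finT _ disj]) (use A_sets in auto)
    then show ?thesis using total by simp
  qed
  define Ev where "Ev = {\<omega> \<in> space M. P (X s \<omega>) \<and> R (X (t + s) \<omega>)}"
  have Ev_sets: "Ev \<in> sets M"
  proof -
    have "Ev = {\<omega> \<in> space M. P (X s \<omega>)} \<inter> {\<omega> \<in> space M. R (X (t + s) \<omega>)}" by (auto simp: Ev_def)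
    then show ?thesis using evt s t by simp
  qed
  have "measure M (Ev - U) \<le> measure M (space M - U)"
    by (rule finite_measure_mono) (use Ev_sets sets.sets_into_space U_sets in auto)
  also have "\<dots> = 0" using prob_compl[OF U_sets] mU by simp
  finally have "measure M (Ev - U) = 0" using measure_nonneg[of M "Ev - U"] by linarith
  then have "measure M Ev = measure M (Ev \<inter> U)"
    using finite_measure_Diff'[OF Ev_sets U_sets] by simp
  also have "Ev \<inter> U = (\<Union>\<tau>\<in>{\<tau> \<in> T. P (fst (snd \<tau>)) \<and> R (snd (snd \<tau>))}. A \<tau>)"
    by (auto simp: Ev_def U_def A_def)
  also have "measure M \<dots> = (\<Sum>\<tau>\<in>{\<tau> \<in> T. P (fst (snd \<tau>)) \<and> R (snd (snd \<tau>))}. measure M (A \<tau>))"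
    by (rule measure_finite_Union) (use finT A_sets disj in \<open>auto simp: disjoint_family_on_def\<close>)
  also have "\<dots> = (\<Sum>\<tau>\<in>T. if P (fst (snd \<tau>)) \<and> R (snd (snd \<tau>)) then measure M (A \<tau>) else 0)"
    by (rule sum.inter_filter[OF finT])
  also have "\<dots> = (\<Sum>a0\<in>S. \<Sum>a\<in>S. \<Sum>b\<in>S. if P a \<and> R b then IP V E p a0 * Pt s a0 a * Pt t a b else 0)"
    unfolding T_def sum3 by (intro sum.cong refl) (simp add: fdd3 T_def)
  also have "\<dots> = (\<Sum>a\<in>S. \<Sum>a0\<in>S. \<Sum>b\<in>S. if P a \<and> R b then IP V E p a0 * Pt s a0 a * Pt t a b else 0)"
    by (rule sum.swap)
  also have "\<dots> = (\<Sum>a\<in>S. \<Sum>b\<in>S. \<Sum>a0\<in>S. if P a \<and> R b then IP V E p a0 * Pt s a0 a * Pt t a b else 0)"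
    by (rule sum.cong[OF refl], rule sum.swap)
  also have "\<dots> = (\<Sum>a\<in>S. \<Sum>b\<in>S. if P a \<and> R b then IP V E p a * Pt t a b else 0)"
  proof (intro sum.cong refl)
    fix a b assume a: "a \<in> S" and b: "b \<in> S"
    have "(\<Sum>a0\<in>S. IP V E p a0 * Pt s a0 a * Pt t a b) = (\<Sum>a0\<in>S. IP V E p a0 * Pt s a0 a) * Pt t a b"
      by (simp add: sum_distrib_right)
    then show "(\<Sum>a0\<in>S. if P a \<and> R b then IP V E p a0 * Pt s a0 a * Pt t a b else 0)
        = (if P a \<and> R b then IP V E p a * Pt t a b else 0)"
      using IP_stat[OF a, of s] by (cases "P a"; cases "R b") (simp_all add: Pt_def)
  qed
  finally show ?thesis unfolding Ev_def Pt_def .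
qed

end

theorem proposition2:
  fixes V :: "'v set" and E :: "'v set set" and p :: real
    and M :: "'w measure" and X :: "real \<Rightarrow> 'w \<Rightarrow> 'v state"
    and x :: 'v and \<sigma> :: "'v \<Rightarrow> int" and s :: real
  assumes "fin_graph V E"
    and "0 \<le> p" and "p \<le> 1"
    and "markov_IP_process V E p M X"
    and "x \<in> V" and "\<sigma> \<in> V \<rightarrow>\<^sub>E {-1, 1}" and "0 \<le> s"
    and "measure M {\<omega> \<in> space M. snd (X s \<omega>) = \<sigma>} > 0"
  shows "((\<lambda>t. (measure M {\<omega> \<in> space M. snd (X (t + s) \<omega>) = flip_spin \<sigma> x \<and> snd (X s \<omega>) = \<sigma>}
                / measure M {\<omega> \<in> space M. snd (X s \<omega>) = \<sigma>}) / t)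
          \<longlongrightarrow> (1 - p) ^ card {e \<in> edges_at E x. delta \<sigma> e = 1}) (at_right 0)"
proof -
  note G = assms(1) and p0 = assms(2) and p1 = assms(3) and mp = assms(4)
    and x = assms(5) and \<sigma> = assms(6) and s = assms(7) and Dpos = assms(8)
  interpret ipm V E p by unfold_locales (use G p0 p1 in auto)
  define \<sigma>' where "\<sigma>' = flip_spin \<sigma> x"
  define D where "D = measure M {\<omega> \<in> space M. snd (X s \<omega>) = \<sigma>}"
  define Cl where "Cl a \<longleftrightarrow> (\<forall>e\<in>edges_at E x. fst a e = 0)" for a :: "'v state"
  have Deq: "D = (\<Sum>a\<in>S. if snd a = \<sigma> then IP V E p a else 0)"
  proof -
    have "D = measure M {\<omega> \<in> space M. snd (X s \<omega>) = \<sigma> \<and> (\<lambda>_. True) (X (1 + s) \<omega>)}"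
      by (simp add: D_def)
    also have "\<dots> = (\<Sum>a\<in>S. \<Sum>b\<in>S. if snd a = \<sigma> \<and> True then IP V E p a * transition V E p 1 a b else 0)"
      by (rule event_measure[OF mp s]) simp
    also have "\<dots> = (\<Sum>a\<in>S. if snd a = \<sigma> then IP V E p a else 0)"
    proof (rule sum.cong[OF refl])
      fix a assume a: "a \<in> S"
      show "(\<Sum>b\<in>S. if snd a = \<sigma> \<and> True then IP V E p a * transition V E p 1 a b else 0)
          = (if snd a = \<sigma> then IP V E p a else 0)"
        using trans_row[OF a, of 1] by (simp add: sum_distrib_left[symmetric])
    qed
    finally show ?thesis .
  qed
  have Dne: "D \<noteq> 0" using Dpos by (simp add: D_def)
  define F where "F t = (\<Sum>a\<in>S. \<Sum>b\<in>S. if snd a = \<sigma> \<and> snd b = \<sigma>' then IP V E p a * (transition V E p t a b / t) else 0) / D" for t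
  have ev: "\<forall>\<^sub>F t in at_right 0. F t = (measure M {\<omega> \<in> space M. snd (X (t + s) \<omega>) = flip_spin \<sigma> x \<and> snd (X s \<omega>) = \<sigma>}
                / measure M {\<omega> \<in> space M. snd (X s \<omega>) = \<sigma>}) / t"
    unfolding eventually_at_right_field
  proof (intro exI[of _ 1] conjI allI impI)
    fix t :: real assume t: "0 < t" "t < 1"
    have "measure M {\<omega> \<in> space M. snd (X (t + s) \<omega>) = flip_spin \<sigma> x \<and> snd (X s \<omega>) = \<sigma>}
        = measure M {\<omega> \<in> space M. snd (X s \<omega>) = \<sigma> \<and> snd (X (t + s) \<omega>) = \<sigma>'}"
      by (rule arg_cong[where f="measure M"]) (auto simp: \<sigma>'_def)
    also have "\<dots> = (\<Sum>a\<in>S. \<Sum>b\<in>S. if snd a = \<sigma> \<and> snd b = \<sigma>' then IP V E p a * transition V E p t a b else 0)"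
      by (rule event_measure[OF mp s]) (use t in simp)
    finally have "measure M {\<omega> \<in> space M. snd (X (t + s) \<omega>) = flip_spin \<sigma> x \<and> snd (X s \<omega>) = \<sigma>} / t
        = (\<Sum>a\<in>S. \<Sum>b\<in>S. if snd a = \<sigma> \<and> snd b = \<sigma>' then IP V E p a * (transition V E p t a b / t) else 0)"
      by (simp add: sum_divide_distrib if_distrib[of "\<lambda>z. z / t"] cong: if_cong)
    then show "F t = (measure M {\<omega> \<in> space M. snd (X (t + s) \<omega>) = flip_spin \<sigma> x \<and> snd (X s \<omega>) = \<sigma>}
                / measure M {\<omega> \<in> space M. snd (X s \<omega>) = \<sigma>}) / t"
      unfolding F_def D_def by (metis (no_types, lifting) divide_divide_eq_left mult.commute)
  qed simp
  have lim: "(F \<longlongrightarrow> (\<Sum>a\<in>S. \<Sum>b\<in>S. if snd a = \<sigma> \<and> snd b = \<sigma>' then IP V E p a * Q a b else 0) / D) (at_right 0)"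
    unfolding F_def
  proof (intro tendsto_divide tendsto_sum tendsto_const Dne)
    fix a b assume a: "a \<in> S" and b: "b \<in> S"
    show "((\<lambda>t. if snd a = \<sigma> \<and> snd b = \<sigma>' then IP V E p a * (transition V E p t a b / t) else 0)
        \<longlongrightarrow> (if snd a = \<sigma> \<and> snd b = \<sigma>' then IP V E p a * Q a b else 0)) (at_right 0)"
    proof (cases "snd a = \<sigma> \<and> snd b = \<sigma>'")
      case True
      then have "a \<noteq> b" using flip_ne[OF \<sigma> x] by (auto simp: \<sigma>'_def)
      then have "((\<lambda>t. IP V E p a * (transition V E p t a b / t)) \<longlongrightarrow> IP V E p a * Q a b) (at_right 0)"
        by (intro tendsto_mult tendsto_const trans_lim[OF a b])
      then show ?thesis using True by simp
    next
      case False
      show ?thesis unfolding if_not_P[OF False] by (rule tendsto_const)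
    qed
  qed
  have val: "(\<Sum>a\<in>S. \<Sum>b\<in>S. if snd a = \<sigma> \<and> snd b = \<sigma>' then IP V E p a * Q a b else 0)
      = (\<Sum>a\<in>S. if snd a = \<sigma> \<and> (\<forall>e\<in>edges_at E x. fst a e = 0) then IP V E p a else 0)"
  proof (rule sum.cong[OF refl])
    fix a assume a: "a \<in> S"
    show "(\<Sum>b\<in>S. if snd a = \<sigma> \<and> snd b = \<sigma>' then IP V E p a * Q a b else 0)
        = (if snd a = \<sigma> \<and> (\<forall>e\<in>edges_at E x. fst a e = 0) then IP V E p a else 0)"
    proof (cases "snd a = \<sigma>")
      case True
      have "(\<Sum>b\<in>S. if snd a = \<sigma> \<and> snd b = \<sigma>' then IP V E p a * Q a b else 0)
          = IP V E p a * (\<Sum>b\<in>S. if snd b = flip_spin \<sigma> x then Q a b else 0)"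
        using True by (simp add: sum_distrib_left \<sigma>'_def if_distrib[of "\<lambda>z. IP V E p a * z"] cong: if_cong)
      also have "\<dots> = IP V E p a * (if \<forall>e\<in>edges_at E x. fst a e = 0 then 1 else 0)"
        by (simp only: flip_sum[OF a True \<sigma> x])
      finally show ?thesis using True by simp
    qed simp
  qed
  have "(\<Sum>a\<in>S. if snd a = \<sigma> \<and> (\<forall>e\<in>edges_at E x. fst a e = 0) then IP V E p a else 0) / D
      = (1 - p) ^ card {e \<in> edges_at E x. delta \<sigma> e = 1}"
    unfolding Deq by (rule fiber_ratio[OF \<sigma> x]) (use Dpos Deq D_def in simp)
  then have "(F \<longlongrightarrow> (1 - p) ^ card {e \<in> edges_at E x. delta \<sigma> e = 1}) (at_right 0)"
    using lim val by simp
  then show ?thesis by (rule tendsto_cong[THEN iffD1, rotated]) (rule ev)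
qed

end
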